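(* Let $0<\phi<\pi/6$, $T>0$, and let $g(y,t)=x^{-\beta}y^{-\delta}$ where $x=t+(3y/2)^{2/3}$, with $\beta>0$ and $\frac23\beta+\delta>0$. Then for any $p\in\mathcal S_\phi$ and $t\in[0,T]$, $$|G(p,t)|\le C|p|^{\frac23\beta+\delta-1},$$ where $G=\mathcal L^{-1}g$ and $C$ is independent of $\nu$ and $T$ but may depend on $\beta$ and $\delta$. If in addition $\frac23\beta+\delta>1$, then for $\nu>1$, $$\|G\|_\nu\le C\nu^{-\frac23\beta-\delta+1}.$$
   Context: Powers use principal branches and $\arg$ is the principal argument; $y$ ranges over a sector $|\arg y|<\pi/2+\phi'$ ($\phi<\phi'<\pi/6$), $|y|$ large. $\mathcal S_\phi=\{p:\arg p\in(-\phi,\phi),0<|p|<\infty\}$. $\mathcal L^{-1}g(p,t)=\frac1{2\pi i}\int_{\mathcal C}e^{py}g(y,t)dy$ with $\mathcal C=\{c+ire^{i\phi'\mathrm{sgn}(r)}:r\in\mathbb R\}$, $c>0$, traversed with $r$ increasing. With $\mathcal K=\overline{\mathcal S_\phi}\times[0,T]$, $\|G\|_\nu=M_0\sup_{\mathcal K}(1+|p|^2)e^{-\nu|p|}|G(p,t)|$, $M_0=\sup_{s\ge0}\frac{2(1+s^2)(\ln(1+s^2)+s\arctan s)}{s(s^2+4)}$. *)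

theory Defs
  imports "HOL-Analysis.Analysis"
begin

definition Sphi :: "real \<Rightarrow> complex set" where
  "Sphi \<phi> = {p. p \<noteq> 0 \<and> - \<phi> < Arg p \<and> Arg p < \<phi>}"

definition gfun :: "real \<Rightarrow> real \<Rightarrow> complex \<Rightarrow> real \<Rightarrow> complex" where
  "gfun \<beta> \<delta> y t =
     (complex_of_real t + (3 * y / 2) powr (2/3)) powr (- complex_of_real \<beta>)
       * y powr (- complex_of_real \<delta>)"

definition contour :: "real \<Rightarrow> real \<Rightarrow> real \<Rightarrow> complex" where
  "contour c \<phi>' r = complex_of_real c + \<i> * complex_of_real r * exp (\<i> * complex_of_real (\<phi>' * sgn r))"

text \<open>Inverse Laplace transform (1/(2 pi i)) int_C e^(py) g(y,t) dy, written via the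
  parametrisation, dy = i e^(i phi' sgn r) dr.\<close>
definition invLap :: "real \<Rightarrow> real \<Rightarrow> (complex \<Rightarrow> real \<Rightarrow> complex) \<Rightarrow> complex \<Rightarrow> real \<Rightarrow> complex" where
  "invLap c \<phi>' g p t =
     (1 / (2 * complex_of_real pi * \<i>)) *
       integral UNIV (\<lambda>r::real. exp (p * contour c \<phi>' r) * g (contour c \<phi>' r) t
                                  * (\<i> * exp (\<i> * complex_of_real (\<phi>' * sgn r))))"

definition M0 :: real where
  "M0 = Sup {2 * (1 + s\<^sup>2) * (ln (1 + s\<^sup>2) + s * arctan s) / (s * (s\<^sup>2 + 4)) | s::real. s \<ge> 0}"

definition norm_nu :: "real \<Rightarrow> real \<Rightarrow> real \<Rightarrow> (complex \<Rightarrow> real \<Rightarrow> complex) \<Rightarrow> real" where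
  "norm_nu \<phi> T \<nu> G = M0 * Sup {(1 + (cmod p)\<^sup>2) * exp (- \<nu> * cmod p) * cmod (G p t)
                                   | p t. p \<in> closure (Sphi \<phi>) \<and> t \<in> {0..T}}"

end

theory Submission
  imports Defs "HOL-Complex_Analysis.Complex_Analysis"
begin


lemma w_facts:
  fixes z :: complex
  assumes "z \<notin> \<real>\<^sub>\<le>\<^sub>0"
  shows "Re (z powr (2/3)) = norm z powr (2/3) * cos (2/3 * Arg z)"
    and "Im (z powr (2/3)) = norm z powr (2/3) * sin (2/3 * Arg z)"
    and "norm (z powr (2/3)) = norm z powr (2/3)"
proof -
  have z0: "z \<noteq> 0" using assms by auto
  have e: "z powr (2/3) = exp (complex_of_real (2/3) * ln z)"
    using z0 by (simp add: powr_def)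
  have r: "Re (complex_of_real (2/3) * ln z) = 2/3 * ln (norm z)" using z0 by simp
  have i: "Im (complex_of_real (2/3) * ln z) = 2/3 * Arg z" using z0 by (simp add: Arg_eq_Im_Ln)
  have ex: "exp (2/3 * ln (norm z)) = norm z powr (2/3)" using z0 by (simp add: powr_def)
  show "Re (z powr (2/3)) = norm z powr (2/3) * cos (2/3 * Arg z)"
    unfolding e Re_exp r i ex ..
  show "Im (z powr (2/3)) = norm z powr (2/3) * sin (2/3 * Arg z)"
    unfolding e Im_exp r i ex ..
  show "norm (z powr (2/3)) = norm z powr (2/3)"
    using norm_powr_real_powr'[of "2/3" z] by simp
qed

lemma w_notin:
  fixes z :: complex
  assumes "z \<notin> \<real>\<^sub>\<le>\<^sub>0"
  shows "z powr (2/3) \<notin> \<real>\<^sub>\<le>\<^sub>0"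
proof
  assume h: "z powr (2/3) \<in> \<real>\<^sub>\<le>\<^sub>0"
  have z0: "z \<noteq> 0" using assms by auto
  have np: "norm z powr (2/3) > 0" using z0 by simp
  have a1: "- pi < Arg z" "Arg z \<le> pi" using Arg_bounded by auto
  from h have "Im (z powr (2/3)) = 0" by (simp add: complex_nonpos_Reals_iff)
  then have "sin (2/3 * Arg z) = 0" using w_facts(2)[OF assms] np by simp
  then have "2/3 * Arg z = 0"
    by (rule sin_eq_0_pi[rotated 2]) (use a1 pi_gt_zero in linarith)+
  then have "Re (z powr (2/3)) > 0" using w_facts(1)[OF assms] np by simp
  with h show False by (simp add: complex_nonpos_Reals_iff)
qed

lemma tw_notin:
  fixes z :: complex and t :: real
  assumes "z \<notin> \<real>\<^sub>\<le>\<^sub>0" "t \<ge> 0"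
  shows "complex_of_real t + z powr (2/3) \<notin> \<real>\<^sub>\<le>\<^sub>0"
  using w_notin[OF assms(1)] assms(2) by (auto simp: complex_nonpos_Reals_iff)

lemma Re_w_lower:
  fixes z :: complex
  assumes "z \<noteq> 0" "Re z \<ge> - norm z / 2"
  shows "Re (z powr (2/3)) \<ge> cos (4*pi/9) * norm z powr (2/3)"
proof -
  have zn: "z \<notin> \<real>\<^sub>\<le>\<^sub>0"
  proof
    assume "z \<in> \<real>\<^sub>\<le>\<^sub>0"
    then have "Im z = 0" "Re z \<le> 0" by (auto simp: complex_nonpos_Reals_iff)
    then have "norm z = - Re z" by (simp add: cmod_def real_sqrt_abs)
    then have "Re z = 0" using assms \<open>Re z \<le> 0\<close> norm_ge_zero[of z] by linarith
    then show False using assms \<open>Im z = 0\<close> by (simp add: complex_eq_iff)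
  qed
  have c: "cos (Arg z) \<ge> -1/2"
    using assms by (simp add: cos_Arg field_simps)
  have a1: "- pi < Arg z" "Arg z \<le> pi" using Arg_bounded by auto
  have "cos \<bar>Arg z\<bar> = cos (Arg z)" by (simp add: abs_if)
  then have "cos (2*pi/3) \<le> cos \<bar>Arg z\<bar>" using c cos_120 by simp
  then have "\<bar>Arg z\<bar> \<le> 2*pi/3" using a1 by (subst (asm) cos_mono_le_eq) auto
  then have b: "\<bar>2/3 * Arg z\<bar> \<le> 4*pi/9" by (simp add: abs_mult)
  have "cos (4*pi/9) \<le> cos \<bar>2/3 * Arg z\<bar>" using b by (subst cos_mono_le_eq) auto
  also have "cos \<bar>2/3 * Arg z\<bar> = cos (2/3 * Arg z)" by (simp add: abs_if)
  finally have "cos (4*pi/9) \<le> cos (2/3 * Arg z)" .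
  then show ?thesis using w_facts(1)[OF zn]
    by (simp add: mult.commute mult_left_mono)
qed

definition ff :: "real \<Rightarrow> real \<Rightarrow> complex \<Rightarrow> real \<Rightarrow> complex \<Rightarrow> complex" where
  "ff \<beta> \<delta> p t y = exp (p * y) * gfun \<beta> \<delta> y t"

lemma scale_notin: "(y::complex) \<notin> \<real>\<^sub>\<le>\<^sub>0 \<Longrightarrow> 3 * y / 2 \<notin> \<real>\<^sub>\<le>\<^sub>0"
  by (auto simp: complex_nonpos_Reals_iff)

lemma ff_holo:
  assumes "t \<ge> 0"
  shows "ff \<beta> \<delta> p t holomorphic_on (- \<real>\<^sub>\<le>\<^sub>0)"
  unfolding ff_def gfun_def
  unfolding ff_def gfun_def
  by (intro holomorphic_intros; simp add: scale_notin tw_notin[OF scale_notin assms])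

lemma gfun_bound:
  fixes y :: complex
  assumes "y \<noteq> 0" "Re y \<ge> - norm y / 2" "t \<ge> 0" and that: "\<beta> > 0"
  shows "norm (gfun \<beta> \<delta> y t) \<le> (cos (4*pi/9) * (3/2) powr (2/3)) powr (-\<beta>) * norm y powr (- (2/3*\<beta> + \<delta>))"
proof -
  define z where "z = 3 * y / 2"
  define \<kappa> where "\<kappa> = cos (4*pi/9)"
  have kp: "\<kappa> > 0" unfolding \<kappa>_def by (rule cos_gt_zero_pi) (use pi_gt_zero in linarith)+
  have z0: "z \<noteq> 0" using assms by (simp add: z_def)
  have nz: "norm z = 3/2 * norm y" by (simp add: z_def norm_mult norm_divide)
  have rz: "Re z \<ge> - norm z / 2" using assms(2) by (simp add: z_def nz)
  have w: "Re (z powr (2/3)) \<ge> \<kappa> * norm z powr (2/3)"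
    using Re_w_lower[OF z0 rz] by (simp add: \<kappa>_def)
  have nzp: "norm z powr (2/3) = (3/2) powr (2/3) * norm y powr (2/3)"
    by (simp only: nz powr_mult)
  define L where "L = \<kappa> * (3/2) powr (2/3) * norm y powr (2/3)"
  have Lp: "L > 0" using kp assms(1) by (simp add: L_def)
  have "L \<le> Re (complex_of_real t + z powr (2/3))" using w assms(3) by (simp add: L_def nzp mult.assoc)
  also have "\<dots> \<le> norm (complex_of_real t + z powr (2/3))" by (rule complex_Re_le_cmod)
  finally have Ll: "L \<le> norm (complex_of_real t + z powr (2/3))" .
  have "norm (gfun \<beta> \<delta> y t) = norm (complex_of_real t + z powr (2/3)) powr (-\<beta>) * norm y powr (-\<delta>)"
    unfolding gfun_def z_def norm_mult
    by (simp add: norm_powr_real_powr')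
  also have "\<dots> \<le> L powr (-\<beta>) * norm y powr (-\<delta>)"
    by (intro mult_right_mono powr_mono2' Ll Lp) (use that in auto)
  also have "L powr (-\<beta>) = (\<kappa> * (3/2) powr (2/3)) powr (-\<beta>) * norm y powr (-(2/3*\<beta>))"
    unfolding L_def powr_mult powr_powr by simp
  finally show ?thesis
    by (simp add: \<kappa>_def mult.assoc add.commute flip: powr_add)
qed



lemma trig_facts:
  assumes "0 < \<phi>'" "\<phi>' < pi/6"
  shows "sin \<phi>' > 0" "sin \<phi>' < 1/2" "cos \<phi>' > 0" "(cos \<phi>')\<^sup>2 \<ge> 3 * (sin \<phi>')\<^sup>2"
proof -
  show s0: "sin \<phi>' > 0" using assms pi_gt_zero by (intro sin_gt_zero) linarith+
  have "sin \<phi>' < sin (pi/6)" using assms pi_gt_zero by (subst sin_mono_less_eq) linarith+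
  then show s1: "sin \<phi>' < 1/2" by (simp add: sin_30)
  show "cos \<phi>' > 0" using assms pi_gt_zero by (intro cos_gt_zero_pi) linarith+
  have "(sin \<phi>')\<^sup>2 \<le> (1/2)\<^sup>2" using s0 s1 by (intro power_mono) auto
  then show "(cos \<phi>')\<^sup>2 \<ge> 3 * (sin \<phi>')\<^sup>2" using sin_cos_squared_add[of \<phi>'] by (simp add: power2_eq_square)
qed

lemma pt_facts:
  fixes y :: complex
  assumes "0 < \<phi>'" "\<phi>' < pi/6" "c > 0" "s \<ge> 0"
    and re: "Re y = c - s * sin \<phi>'" and im: "\<bar>Im y\<bar> = s * cos \<phi>'"
  shows "y \<notin> \<real>\<^sub>\<le>\<^sub>0" "y \<noteq> 0" "Re y \<ge> - norm y / 2" "(1 - sin \<phi>') * (c\<^sup>2 + s\<^sup>2) \<le> (norm y)\<^sup>2"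
proof -
  note tf = trig_facts[OF assms(1,2)]
  show yn: "y \<notin> \<real>\<^sub>\<le>\<^sub>0"
  proof (cases "s = 0")
    case True then show ?thesis using re assms(3) by (auto simp: complex_nonpos_Reals_iff)
  next
    case False
    then have "Im y \<noteq> 0" using im tf assms(4) by auto
    then show ?thesis by (auto simp: complex_nonpos_Reals_iff)
  qed
  then show "y \<noteq> 0" by auto
  have n2: "(norm y)\<^sup>2 = (Re y)\<^sup>2 + (s * cos \<phi>')\<^sup>2"
    using cmod_power2[of y] im by (metis power2_abs)
  also have "\<dots> = c\<^sup>2 - 2 * c * s * sin \<phi>' + (s\<^sup>2 * (sin \<phi>')\<^sup>2 + s\<^sup>2 * (cos \<phi>')\<^sup>2)"
    unfolding re by (simp add: power2_eq_square algebra_simps del: sin_cos_squared_add)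
  also have "s\<^sup>2 * (sin \<phi>')\<^sup>2 + s\<^sup>2 * (cos \<phi>')\<^sup>2 = s\<^sup>2 * ((sin \<phi>')\<^sup>2 + (cos \<phi>')\<^sup>2)"
    by (simp only: distrib_left)
  also have "\<dots> = s\<^sup>2" by (simp only: sin_cos_squared_add mult_1_right)
  finally have n2': "(norm y)\<^sup>2 = c\<^sup>2 - 2 * c * s * sin \<phi>' + s\<^sup>2" .
  have "2 * c * s \<le> c\<^sup>2 + s\<^sup>2" using sum_squares_bound[of c s] by (simp add: power2_eq_square)
  then have "2 * c * s * sin \<phi>' \<le> (c\<^sup>2 + s\<^sup>2) * sin \<phi>'" using tf by (intro mult_right_mono) auto
  then show "(1 - sin \<phi>') * (c\<^sup>2 + s\<^sup>2) \<le> (norm y)\<^sup>2" unfolding n2' by (simp add: algebra_simps)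
  show "Re y \<ge> - norm y / 2"
  proof (cases "Re y \<ge> 0")
    case True then show ?thesis using norm_ge_zero[of y] by linarith
  next
    case False
    define X where "X = - Re y"
    have X0: "X > 0" using False by (simp add: X_def)
    have Xle: "X \<le> s * sin \<phi>'" using re assms(3) by (simp add: X_def)
    have "X\<^sup>2 \<le> (s * sin \<phi>')\<^sup>2" using X0 Xle by (intro power_mono) auto
    also have "(s * sin \<phi>')\<^sup>2 = s\<^sup>2 * (sin \<phi>')\<^sup>2" by (simp add: power_mult_distrib)
    finally have a: "3 * X\<^sup>2 \<le> s\<^sup>2 * (3 * (sin \<phi>')\<^sup>2)" by simp
    have b: "s\<^sup>2 * (3 * (sin \<phi>')\<^sup>2) \<le> s\<^sup>2 * (cos \<phi>')\<^sup>2" using tf(4) by (intro mult_left_mono) auto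
    have "(2 * X)\<^sup>2 \<le> (norm y)\<^sup>2"
    proof -
      have q1: "(2 * X)\<^sup>2 = 4 * X\<^sup>2" by (simp add: power_mult_distrib)
      have q2: "(s * cos \<phi>')\<^sup>2 = s\<^sup>2 * (cos \<phi>')\<^sup>2" by (simp add: power_mult_distrib)
      have q3: "(Re y)\<^sup>2 = X\<^sup>2" by (simp add: X_def)
      show ?thesis using a b n2 q1 q2 q3 by linarith
    qed
    then have "2 * X \<le> norm y" by (rule power2_le_imp_le) simp
    then show ?thesis by (simp add: X_def)
  qed
qed

lemma cone_Im:
  fixes p :: complex
  assumes "0 < \<phi>" "\<phi> < pi/2" "cos \<phi> * norm p \<le> Re p"
  shows "\<bar>Im p\<bar> \<le> sin \<phi> * norm p"
proof -
  have c0: "cos \<phi> > 0" using assms pi_gt_zero by (intro cos_gt_zero_pi) linarith+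
  have s0: "sin \<phi> > 0" using assms pi_gt_zero by (intro sin_gt_zero) linarith+
  have "(cos \<phi> * norm p)\<^sup>2 \<le> (Re p)\<^sup>2" using assms c0 by (intro power_mono) auto
  then have h1: "(cos \<phi>)\<^sup>2 * (norm p)\<^sup>2 \<le> (Re p)\<^sup>2" by (simp add: power_mult_distrib)
  have h2: "(Im p)\<^sup>2 = (norm p)\<^sup>2 - (Re p)\<^sup>2" using cmod_power2[of p] by simp
  have "(sin \<phi> * norm p)\<^sup>2 = (1 - (cos \<phi>)\<^sup>2) * (norm p)\<^sup>2"
    by (simp only: power_mult_distrib sin_squared_eq)
  then have h3: "(sin \<phi> * norm p)\<^sup>2 = (norm p)\<^sup>2 - (cos \<phi>)\<^sup>2 * (norm p)\<^sup>2"
    by (simp add: algebra_simps)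
  have "(Im p)\<^sup>2 \<le> (sin \<phi> * norm p)\<^sup>2" using h1 h2 h3 by linarith
  then have "\<bar>Im p\<bar>\<^sup>2 \<le> (sin \<phi> * norm p)\<^sup>2" by simp
  then show ?thesis by (rule power2_le_imp_le) (use s0 in auto)
qed

lemma pt_Re_py:
  fixes y p :: complex
  assumes "0 < \<phi>" "\<phi> < \<phi>'" "\<phi>' < pi/6" "c > 0" "s \<ge> 0"
    and re: "Re y = c - s * sin \<phi>'" and im: "\<bar>Im y\<bar> = s * cos \<phi>'"
    and pc: "cos \<phi> * norm p \<le> Re p"
  shows "Re (p * y) \<le> c * norm p - s * norm p * sin (\<phi>' - \<phi>)"
proof -
  note tf = trig_facts[of \<phi>'] 
  have tf': "sin \<phi>' > 0" "cos \<phi>' > 0" using tf assms by auto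
  have c0: "cos \<phi> \<ge> 0" using assms pi_gt_zero by (intro cos_ge_zero) linarith+
  have ip: "\<bar>Im p\<bar> \<le> sin \<phi> * norm p" using assms by (intro cone_Im) auto
  have rp: "Re p \<le> norm p" by (rule complex_Re_le_cmod)
  have e1: "Re (p * y) = Re p * c - (s * sin \<phi>') * Re p - Im p * Im y" by (simp add: re algebra_simps)
  have i1: "Re p * c \<le> norm p * c" using rp assms by (intro mult_right_mono) auto
  have i2: "(s * sin \<phi>') * (cos \<phi> * norm p) \<le> (s * sin \<phi>') * Re p"
    using pc tf' assms by (intro mult_left_mono) auto
  have i3: "- (Im p * Im y) \<le> \<bar>Im p\<bar> * \<bar>Im y\<bar>" using abs_ge_minus_self[of "Im p * Im y"] by (simp add: abs_mult)
  have i4: "\<bar>Im p\<bar> * \<bar>Im y\<bar> \<le> (sin \<phi> * norm p) * (s * cos \<phi>')"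
    unfolding im using ip tf' assms by (intro mult_right_mono) auto
  have e2: "c * norm p - s * norm p * sin (\<phi>' - \<phi>) = norm p * c - (s * sin \<phi>') * (cos \<phi> * norm p) + (sin \<phi> * norm p) * (s * cos \<phi>')"
    by (simp add: sin_diff algebra_simps)
  show ?thesis unfolding e2 e1 using i1 i2 i3 i4 by linarith
qed

definition Kg :: "real \<Rightarrow> real" where
  "Kg \<beta> = (cos (4*pi/9) * (3/2) powr (2/3)) powr (-\<beta>)"

lemma Kg_pos: "Kg \<beta> > 0"
proof -
  have "cos (4*pi/9) > 0" by (rule cos_gt_zero_pi) (use pi_gt_zero in linarith)+
  then show ?thesis by (simp add: Kg_def)
qed

lemma ff_bound:
  fixes y p :: complex
  assumes "0 < \<phi>" "\<phi> < \<phi>'" "\<phi>' < pi/6" "c > 0" "s \<ge> 0"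
    and re: "Re y = c - s * sin \<phi>'" and im: "\<bar>Im y\<bar> = s * cos \<phi>'"
    and pc: "cos \<phi> * norm p \<le> Re p"
    and t: "t \<ge> 0" and b: "\<beta> > 0" and a: "2/3*\<beta> + \<delta> > 0"
  shows "norm (ff \<beta> \<delta> p t y) \<le> exp (c * norm p - s * norm p * sin (\<phi>' - \<phi>)) *
            (Kg \<beta> * ((1 - sin \<phi>') * (c\<^sup>2 + s\<^sup>2)) powr (- (2/3*\<beta> + \<delta>) / 2))"
proof -
  have a0: "0 < \<phi>'" using assms by linarith
  note pf = pt_facts[OF a0 assms(3,4,5) re im]
  note tf = trig_facts[OF a0 assms(3)]
  define Q where "Q = (1 - sin \<phi>') * (c\<^sup>2 + s\<^sup>2)"
  have "c\<^sup>2 > 0" using assms(4) by simp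
  then have "c\<^sup>2 + s\<^sup>2 > 0" by (simp add: add_pos_nonneg)
  then have Q0: "Q > 0" unfolding Q_def using tf by (intro mult_pos_pos) auto
  have e: "norm (exp (p * y)) \<le> exp (c * norm p - s * norm p * sin (\<phi>' - \<phi>))"
    unfolding norm_exp_eq_Re using pt_Re_py[OF assms(1-5) re im pc] by simp
  have g: "norm (gfun \<beta> \<delta> y t) \<le> Kg \<beta> * norm y powr (- (2/3*\<beta> + \<delta>))"
    using gfun_bound[OF pf(2) pf(3) t b] by (simp add: Kg_def)
  have "sqrt Q \<le> sqrt ((norm y)\<^sup>2)" using pf(4) unfolding Q_def by (rule real_sqrt_le_mono)
  then have sq: "sqrt Q \<le> norm y" by simp
  have "norm y powr (- (2/3*\<beta> + \<delta>)) \<le> sqrt Q powr (- (2/3*\<beta> + \<delta>))"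
    using a Q0 sq by (intro powr_mono2') auto
  also have "sqrt Q powr (- (2/3*\<beta> + \<delta>)) = Q powr (- (2/3*\<beta> + \<delta>) / 2)"
    using Q0 by (simp add: powr_half_sqrt[symmetric] powr_powr)
  finally have g2: "norm (gfun \<beta> \<delta> y t) \<le> Kg \<beta> * Q powr (- (2/3*\<beta> + \<delta>) / 2)"
    using g Kg_pos[of \<beta>] by (meson mult_left_mono less_imp_le order_trans)
  have "norm (ff \<beta> \<delta> p t y) = norm (exp (p * y)) * norm (gfun \<beta> \<delta> y t)"
    by (simp add: ff_def norm_mult)
  also have "\<dots> \<le> exp (c * norm p - s * norm p * sin (\<phi>' - \<phi>)) * (Kg \<beta> * Q powr (- (2/3*\<beta> + \<delta>) / 2))"
    using e g2 by (intro mult_mono) auto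
  finally show ?thesis by (simp add: Q_def)
qed

definition hh :: "real \<Rightarrow> real \<Rightarrow> real \<Rightarrow> complex \<Rightarrow> real \<Rightarrow> real \<Rightarrow> real \<Rightarrow> complex" where
  "hh \<beta> \<delta> \<phi>' p t c r = exp (p * contour c \<phi>' r) * gfun \<beta> \<delta> (contour c \<phi>' r) t
                                  * (\<i> * exp (\<i> * complex_of_real (\<phi>' * sgn r)))"

lemma invLap_hh: "invLap c \<phi>' (gfun \<beta> \<delta>) p t = (1 / (2 * complex_of_real pi * \<i>)) * integral UNIV (hh \<beta> \<delta> \<phi>' p t c)"
  unfolding invLap_def hh_def ..

lemma contour_Re: "Re (contour c \<phi>' r) = c - \<bar>r\<bar> * sin \<phi>'"
  by (cases "r > 0"; cases "r < 0") (auto simp: contour_def Re_exp Im_exp)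

lemma contour_Im: "Im (contour c \<phi>' r) = r * cos \<phi>'"
  by (cases "r > 0"; cases "r < 0") (auto simp: contour_def Re_exp Im_exp)

lemma norm_hh: "norm (hh \<beta> \<delta> \<phi>' p t c r) = norm (ff \<beta> \<delta> p t (contour c \<phi>' r))"
  by (simp add: hh_def ff_def norm_mult norm_exp_eq_Re)

lemma hh_bound:
  assumes "0 < \<phi>" "\<phi> < \<phi>'" "\<phi>' < pi/6" "c > 0"
    and pc: "cos \<phi> * norm p \<le> Re p"
    and t: "t \<ge> 0" and b: "\<beta> > 0" and a: "2/3*\<beta> + \<delta> > 0"
  shows "norm (hh \<beta> \<delta> \<phi>' p t c r) \<le> exp (c * norm p - \<bar>r\<bar> * norm p * sin (\<phi>' - \<phi>)) *
            (Kg \<beta> * ((1 - sin \<phi>') * (c\<^sup>2 + r\<^sup>2)) powr (- (2/3*\<beta> + \<delta>) / 2))"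
proof -
  have cp: "cos \<phi>' > 0" using trig_facts[of \<phi>'] assms by auto
  have im: "\<bar>Im (contour c \<phi>' r)\<bar> = \<bar>r\<bar> * cos \<phi>'" using cp by (simp add: contour_Im abs_mult)
  show ?thesis unfolding norm_hh
    using ff_bound[OF assms(1-4) _ contour_Re im pc t b a] by simp
qed



lemma UNIV_int:
  fixes g :: "real \<Rightarrow> real"
  assumes g0: "\<And>x. g x \<ge> 0"
    and gi: "\<And>K. K \<ge> K0 \<Longrightarrow> g integrable_on {-K..K} \<and> integral {-K..K} g \<le> M"
  shows "g integrable_on UNIV" "integral UNIV g \<le> M"
proof -
  define f where "f = (\<lambda>k::nat. \<lambda>x. if x \<in> {-real k..real k} then g x else 0)"
  have fi: "g integrable_on {-real k..real k}" for k
  proof -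
    have "g integrable_on {-max K0 (real k) .. max K0 (real k)}" using gi by auto
    then show ?thesis by (rule integrable_subinterval_real) auto
  qed
  have fle: "integral {-real k..real k} g \<le> M" for k
  proof -
    have "integral {-real k..real k} g \<le> integral {-max K0 (real k) .. max K0 (real k)} g"
      using gi fi g0 by (intro integral_subset_le) auto
    also have "\<dots> \<le> M" using gi by auto
    finally show ?thesis .
  qed
  have fint: "f k integrable_on UNIV" for k
    unfolding f_def integrable_restrict_UNIV by (rule fi)
  have fval: "integral UNIV (f k) = integral {-real k..real k} g" for k
    unfolding f_def integral_restrict_UNIV ..
  have mono: "f k x \<le> f (Suc k) x" for k x
    unfolding f_def using g0[of x] by auto
  have conv: "(\<lambda>k. f k x) \<longlonglongrightarrow> g x" for x
  proof (rule tendsto_eventually)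
    obtain n :: nat where n: "\<bar>x\<bar> \<le> real n" using real_arch_simple by blast
    show "\<forall>\<^sub>F k in sequentially. f k x = g x"
      using eventually_ge_at_top[of n] by eventually_elim (use n in \<open>auto simp: f_def\<close>)
  qed
  have bou: "bounded (range (\<lambda>k. integral UNIV (f k)))"
  proof -
    have "\<bar>integral UNIV (f k)\<bar> \<le> M" for k
      unfolding fval using fle[of k] integral_nonneg[OF fi[of k]] g0 by (simp add: abs_le_iff)
    then show ?thesis by (auto simp: bounded_iff)
  qed
  have mc: "g integrable_on UNIV \<and> (\<lambda>k. integral UNIV (f k)) \<longlonglongrightarrow> integral UNIV g"
    using monotone_convergence_increasing[of f UNIV g] fint mono conv bou by blast
  then show "g integrable_on UNIV" by auto
  show "integral UNIV g \<le> M"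
    using mc fle fval by (intro LIMSEQ_le_const2[of "\<lambda>k. integral UNIV (f k)"]) auto
qed

lemma even_int:
  fixes g :: "real \<Rightarrow> real"
  assumes ev: "\<And>x. g (-x) = g x" and "K \<ge> 0" and h: "(g has_integral I) {0..K}"
  shows "(g has_integral (2 * I)) {-K..K}"
proof -
  have "((\<lambda>x. g (-x)) has_integral I) {-K..-0}" using h by (subst has_integral_reflect_real) 
  then have "(g has_integral I) {-K..0}" by (simp add: ev)
  then have "(g has_integral (I + I)) {-K..K}" using h assms(2) by (intro has_integral_combine) auto
  then show ?thesis by simp
qed

lemma int_exp:
  fixes \<kappa> K :: real
  assumes "\<kappa> > 0" "K \<ge> 0"
  shows "(\<lambda>r. exp (- \<kappa> * \<bar>r\<bar>)) integrable_on {-K..K} \<and> integral {-K..K} (\<lambda>r. exp (- \<kappa> * \<bar>r\<bar>)) \<le> 2 / \<kappa>"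
proof -
  define A where "A = (\<lambda>r. - exp (- \<kappa> * r) / \<kappa>)"
  have d: "(A has_vector_derivative exp (- \<kappa> * r)) (at r within {0..K})" for r
    unfolding A_def has_real_derivative_iff_has_vector_derivative[symmetric]
    using assms by (auto intro!: derivative_eq_intros)
  have "((\<lambda>r. exp (- \<kappa> * r)) has_integral (A K - A 0)) {0..K}"
    using d assms by (intro fundamental_theorem_of_calculus) auto
  then have "((\<lambda>r. exp (- \<kappa> * \<bar>r\<bar>)) has_integral (A K - A 0)) {0..K}"
    by (rule has_integral_eq[rotated]) auto
  then have h: "((\<lambda>r. exp (- \<kappa> * \<bar>r\<bar>)) has_integral (2 * (A K - A 0))) {-K..K}"
    using assms by (intro even_int) auto
  have "2 * (A K - A 0) \<le> 2 / \<kappa>" using assms by (simp add: A_def field_simps)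
  then show ?thesis using h by (auto simp: integrable_on_def integral_unique)
qed

lemma int_pow:
  fixes a c K :: real
  assumes "a > 1" "c > 0" "K \<ge> c"
  shows "(\<lambda>r. (max c \<bar>r\<bar>) powr (-a)) integrable_on {-K..K} \<and>
         integral {-K..K} (\<lambda>r. (max c \<bar>r\<bar>) powr (-a)) \<le> 2 * c powr (1 - a) + 2 * c powr (1 - a) / (a - 1)"
proof -
  define A where "A = (\<lambda>r::real. r powr (1 - a) / (1 - a))"
  have d: "(A has_vector_derivative r powr (-a)) (at r within {c..K})" if "r \<in> {c..K}" for r
  proof -
    have r0: "r > 0" using that assms by auto
    have "((\<lambda>z. z powr (1-a)) has_real_derivative (1-a) * r powr (1-a-1)) (at r)"
      by (rule has_real_derivative_powr[OF r0])
    then have "(A has_real_derivative ((1 - a) * r powr (1 - a - 1)) / (1 - a)) (at r)"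
      unfolding A_def by (rule DERIV_cdivide)
    then have "(A has_real_derivative ((1 - a) * r powr (1 - a - 1)) / (1 - a)) (at r within {c..K})"
      by (rule has_field_derivative_at_within)
    moreover have "((1 - a) * r powr (1 - a - 1)) / (1 - a) = r powr (-a)" using assms by simp
    ultimately show ?thesis by (simp add: has_real_derivative_iff_has_vector_derivative)
  qed
  have "((\<lambda>r. r powr (-a)) has_integral (A K - A c)) {c..K}"
    using d assms by (intro fundamental_theorem_of_calculus) auto
  then have h2: "((\<lambda>r. (max c \<bar>r\<bar>) powr (-a)) has_integral (A K - A c)) {c..K}"
    by (rule has_integral_eq[rotated]) (use assms in auto)
  have h1: "((\<lambda>r. (max c \<bar>r\<bar>) powr (-a)) has_integral (c * c powr (-a))) {0..c}"
  proof -
    have "((\<lambda>r. c powr (-a)) has_integral (c * c powr (-a))) {0..c}"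
      using has_integral_const_real[of "c powr (-a)" 0 c] assms by simp
    then show ?thesis by (rule has_integral_eq[rotated]) (use assms in auto)
  qed
  have h: "((\<lambda>r. (max c \<bar>r\<bar>) powr (-a)) has_integral (c * c powr (-a) + (A K - A c))) {0..K}"
    using h1 h2 assms by (intro has_integral_combine) auto
  then have hh: "((\<lambda>r. (max c \<bar>r\<bar>) powr (-a)) has_integral (2 * (c * c powr (-a) + (A K - A c)))) {-K..K}"
    using assms by (intro even_int) auto
  have e1: "c * c powr (-a) = c powr (1 - a)" using assms by (simp add: powr_diff powr_minus field_simps)
  have "A K - A c = (c powr (1 - a) - K powr (1 - a)) / (a - 1)"
  proof -
    have nd: "\<And>x. x / (1 - a) = - (x / (a - 1))" by (metis divide_minus_right minus_diff_eq)
    show ?thesis unfolding A_def nd by (simp add: diff_divide_distrib)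
  qed
  also have "\<dots> \<le> c powr (1 - a) / (a - 1)" using assms by (intro divide_right_mono) auto
  finally have "A K - A c \<le> c powr (1 - a) / (a - 1)" .
  then have "2 * (c * c powr (-a) + (A K - A c)) \<le> 2 * c powr (1 - a) + 2 * c powr (1 - a) / (a - 1)"
    unfolding e1 by simp
  then show ?thesis using hh by (auto simp: integrable_on_def integral_unique)
qed



definition wp :: "real \<Rightarrow> complex" where "wp \<phi>' = \<i> * exp (\<i> * complex_of_real \<phi>')"
definition wm :: "real \<Rightarrow> complex" where "wm \<phi>' = \<i> * exp (\<i> * complex_of_real (- \<phi>'))"

lemma contour_pos: "r \<ge> 0 \<Longrightarrow> contour c \<phi>' r = complex_of_real c + complex_of_real r * wp \<phi>'"
  by (cases "r = 0") (auto simp: contour_def wp_def)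

lemma contour_neg: "r \<le> 0 \<Longrightarrow> contour c \<phi>' r = complex_of_real c + complex_of_real r * wm \<phi>'"
  by (cases "r = 0") (auto simp: contour_def wm_def)

lemma hh_pos: "r > 0 \<Longrightarrow> hh \<beta> \<delta> \<phi>' p t c r = ff \<beta> \<delta> p t (complex_of_real c + complex_of_real r * wp \<phi>') * wp \<phi>'"
  using contour_pos[of r c \<phi>'] by (simp add: hh_def ff_def wp_def)

lemma hh_neg: "r < 0 \<Longrightarrow> hh \<beta> \<delta> \<phi>' p t c r = ff \<beta> \<delta> p t (complex_of_real c + complex_of_real r * wm \<phi>') * wm \<phi>'"
  using contour_neg[of r c \<phi>'] by (simp add: hh_def ff_def wm_def)

lemma contour_in:
  assumes "0 < \<phi>'" "\<phi>' < pi/6" "c > 0"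
  shows "contour c \<phi>' r \<notin> \<real>\<^sub>\<le>\<^sub>0"
proof -
  have cp: "cos \<phi>' > 0" using trig_facts assms by auto
  have im: "\<bar>Im (contour c \<phi>' r)\<bar> = \<bar>r\<bar> * cos \<phi>'" using cp by (simp add: contour_Im abs_mult)
  show ?thesis using pt_facts(1)[OF assms _ contour_Re im] by simp
qed

lemma slit_eq: "- \<real>\<^sub>\<le>\<^sub>0 = - (complex_of_real ` {..0})"
proof -
  have "\<real>\<^sub>\<le>\<^sub>0 = complex_of_real ` {..0}"
  proof (intro set_eqI iffI)
    fix x :: complex assume "x \<in> \<real>\<^sub>\<le>\<^sub>0"
    then have "Re x \<le> 0" "Im x = 0" by (auto simp: complex_nonpos_Reals_iff)
    then have "x = complex_of_real (Re x)" by (simp add: complex_eq_iff)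
    then show "x \<in> complex_of_real ` {..0}" using \<open>Re x \<le> 0\<close> by blast
  next
    fix x :: complex assume "x \<in> complex_of_real ` {..0}"
    then show "x \<in> \<real>\<^sub>\<le>\<^sub>0" by (auto simp: complex_nonpos_Reals_iff)
  qed
  then show ?thesis by simp
qed

lemma prim:
  assumes "t \<ge> 0"
  shows "\<exists>F. \<forall>y. y \<notin> \<real>\<^sub>\<le>\<^sub>0 \<longrightarrow> (F has_field_derivative ff \<beta> \<delta> p t y) (at y)"
proof -
  have op: "open (- \<real>\<^sub>\<le>\<^sub>0 :: complex set)" by (simp add: open_Compl)
  have st: "starlike (- \<real>\<^sub>\<le>\<^sub>0 :: complex set)"
    unfolding slit_eq by (rule starlike_slotted_complex_plane_left)
  have ho: "ff \<beta> \<delta> p t holomorphic_on (- \<real>\<^sub>\<le>\<^sub>0)" by (rule ff_holo[OF assms])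
  obtain F where "\<forall>x \<in> - \<real>\<^sub>\<le>\<^sub>0. (F has_field_derivative ff \<beta> \<delta> p t x) (at x)"
    using holomorphic_starlike_primitive[OF holomorphic_on_imp_continuous_on[OF ho] st op finite.emptyI]
      ho op holomorphic_on_imp_differentiable_at by blast
  then show ?thesis by auto
qed

lemma ftc_line:
  assumes Fd: "\<forall>y. y \<notin> \<real>\<^sub>\<le>\<^sub>0 \<longrightarrow> (F has_field_derivative ff \<beta> \<delta> p t y) (at y)"
    and a: "a \<le> b"
    and inD: "\<And>r. r \<in> {a..b} \<Longrightarrow> complex_of_real c + complex_of_real r * w \<notin> \<real>\<^sub>\<le>\<^sub>0"
  shows "((\<lambda>r. ff \<beta> \<delta> p t (complex_of_real c + complex_of_real r * w) * w) has_integral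
           (F (complex_of_real c + complex_of_real b * w) - F (complex_of_real c + complex_of_real a * w))) {a..b}"
proof (rule fundamental_theorem_of_calculus[OF a])
  fix r assume r: "r \<in> {a..b}"
  have d1: "(F has_field_derivative ff \<beta> \<delta> p t (complex_of_real c + complex_of_real r * w)) (at (complex_of_real c + complex_of_real r * w))"
    using Fd inD[OF r] by blast
  have d2: "((\<lambda>z. complex_of_real c + z * w) has_field_derivative w) (at (complex_of_real r))"
    by (auto intro!: derivative_eq_intros)
  have "((\<lambda>z. F (complex_of_real c + z * w)) has_field_derivative ff \<beta> \<delta> p t (complex_of_real c + complex_of_real r * w) * w) (at (complex_of_real r))"
    using DERIV_chain2[OF d1 d2] .
  then show "((\<lambda>r. F (complex_of_real c + complex_of_real r * w)) has_vector_derivative ff \<beta> \<delta> p t (complex_of_real c + complex_of_real r * w) * w) (at r within {a..b})"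
    by (rule has_vector_derivative_real_field)
qed

lemma hh_has_int:
  assumes Fd: "\<forall>y. y \<notin> \<real>\<^sub>\<le>\<^sub>0 \<longrightarrow> (F has_field_derivative ff \<beta> \<delta> p t y) (at y)"
    and ph: "0 < \<phi>'" "\<phi>' < pi/6" and c: "c > 0" and R: "R \<ge> 0"
  shows "(hh \<beta> \<delta> \<phi>' p t c has_integral (F (contour c \<phi>' R) - F (contour c \<phi>' (-R)))) {-R..R}"
proof -
  have i1: "((\<lambda>r. ff \<beta> \<delta> p t (complex_of_real c + complex_of_real r * wp \<phi>') * wp \<phi>') has_integral
           (F (complex_of_real c + complex_of_real R * wp \<phi>') - F (complex_of_real c + complex_of_real 0 * wp \<phi>'))) {0..R}"
    using R contour_in[OF ph c] by (intro ftc_line[OF Fd]) (auto simp flip: contour_pos)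
  have e1: "contour c \<phi>' R = complex_of_real c + complex_of_real R * wp \<phi>'" using contour_pos[OF R] .
  have e0: "contour c \<phi>' 0 = complex_of_real c + complex_of_real 0 * wp \<phi>'" by (rule contour_pos) simp
  have i1': "(hh \<beta> \<delta> \<phi>' p t c has_integral (F (contour c \<phi>' R) - F (contour c \<phi>' 0))) {0..R}"
    unfolding e1 e0 by (rule has_integral_spike_finite[of "{0}", OF _ _ i1]) (use R in \<open>auto simp: hh_pos contour_pos\<close>)
  have i2: "((\<lambda>r. ff \<beta> \<delta> p t (complex_of_real c + complex_of_real r * wm \<phi>') * wm \<phi>') has_integral
           (F (complex_of_real c + complex_of_real 0 * wm \<phi>') - F (complex_of_real c + complex_of_real (-R) * wm \<phi>'))) {-R..0}"
    using R contour_in[OF ph c] by (intro ftc_line[OF Fd]) (auto simp flip: contour_neg)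
  have e2: "contour c \<phi>' (-R) = complex_of_real c + complex_of_real (-R) * wm \<phi>'" by (rule contour_neg) (use R in simp)
  have e3: "contour c \<phi>' 0 = complex_of_real c + complex_of_real 0 * wm \<phi>'" by (rule contour_neg) simp
  have i2': "(hh \<beta> \<delta> \<phi>' p t c has_integral (F (contour c \<phi>' 0) - F (contour c \<phi>' (-R)))) {-R..0}"
    unfolding e2 e3 by (rule has_integral_spike_finite[of "{0}", OF _ _ i2]) (use R in \<open>auto simp: hh_neg contour_neg\<close>)
  have "(hh \<beta> \<delta> \<phi>' p t c has_integral ((F (contour c \<phi>' 0) - F (contour c \<phi>' (-R))) + (F (contour c \<phi>' R) - F (contour c \<phi>' 0)))) {-R..R}"
    using R by (intro has_integral_combine[OF _ _ i2' i1']) auto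
  then show ?thesis by simp
qed

lemma hh_int_cbox:
  assumes Fd: "\<forall>y. y \<notin> \<real>\<^sub>\<le>\<^sub>0 \<longrightarrow> (F has_field_derivative ff \<beta> \<delta> p t y) (at y)"
    and ph: "0 < \<phi>'" "\<phi>' < pi/6" and c: "c > 0"
  shows "hh \<beta> \<delta> \<phi>' p t c integrable_on cbox a b"
proof -
  define R where "R = max \<bar>a\<bar> \<bar>b\<bar>"
  have "hh \<beta> \<delta> \<phi>' p t c integrable_on {-R..R}"
    using hh_has_int[OF Fd ph c, of R] unfolding integrable_on_def R_def by fastforce
  then have "hh \<beta> \<delta> \<phi>' p t c integrable_on {a..b}"
    by (rule integrable_subinterval_real) (auto simp: R_def)
  then show ?thesis by simp
qed

lemma hh_lim:
  assumes Fd: "\<forall>y. y \<notin> \<real>\<^sub>\<le>\<^sub>0 \<longrightarrow> (F has_field_derivative ff \<beta> \<delta> p t y) (at y)"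
    and ph: "0 < \<phi>'" "\<phi>' < pi/6" and c: "c > 0"
    and B: "B integrable_on UNIV" "\<And>r. norm (hh \<beta> \<delta> \<phi>' p t c r) \<le> B r"
  shows "hh \<beta> \<delta> \<phi>' p t c integrable_on UNIV"
    "(\<lambda>k::nat. F (contour c \<phi>' (real k)) - F (contour c \<phi>' (- real k))) \<longlonglongrightarrow> integral UNIV (hh \<beta> \<delta> \<phi>' p t c)"
proof -
  let ?h = "hh \<beta> \<delta> \<phi>' p t c"
  define f where "f = (\<lambda>k::nat. \<lambda>x. if x \<in> {-real k..real k} then ?h x else 0)"
  have fi: "f k integrable_on UNIV" for k
    unfolding f_def integrable_restrict_UNIV using hh_int_cbox[OF Fd ph c, of "-real k" "real k"] by simp
  have fv: "integral UNIV (f k) = F (contour c \<phi>' (real k)) - F (contour c \<phi>' (- real k))" for k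
    unfolding f_def integral_restrict_UNIV using hh_has_int[OF Fd ph c, of "real k"] by (simp add: integral_unique)
  have fb: "norm (f k x) \<le> B x" for k x
  proof -
    have "0 \<le> B x" using B(2)[of x] norm_ge_zero order_trans by blast
    then show ?thesis unfolding f_def using B(2)[of x] by auto
  qed
  have conv: "(\<lambda>k. f k x) \<longlonglongrightarrow> ?h x" for x
  proof (rule tendsto_eventually)
    obtain n :: nat where n: "\<bar>x\<bar> \<le> real n" using real_arch_simple by blast
    show "\<forall>\<^sub>F k in sequentially. f k x = ?h x"
      using eventually_ge_at_top[of n] by eventually_elim (use n in \<open>auto simp: f_def\<close>)
  qed
  note dc = dominated_convergence[of f UNIV B ?h, OF fi B(1) fb conv]
  show "?h integrable_on UNIV" using dc(1) .
  show "(\<lambda>k::nat. F (contour c \<phi>' (real k)) - F (contour c \<phi>' (- real k))) \<longlonglongrightarrow> integral UNIV ?h"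
    using dc(2) unfolding fv .
qed

lemma contour_affine: "(1 - u) *\<^sub>R contour c1 \<phi>' r + u *\<^sub>R contour c2 \<phi>' r = contour ((1 - u) * c1 + u * c2) \<phi>' r"
  by (simp add: contour_def scaleR_conv_of_real algebra_simps)

lemma seg_bound:
  assumes Fd: "\<forall>y. y \<notin> \<real>\<^sub>\<le>\<^sub>0 \<longrightarrow> (F has_field_derivative ff \<beta> \<delta> p t y) (at y)"
    and "0 < \<phi>" "\<phi> < \<phi>'" "\<phi>' < pi/6" and c: "c1 > 0" "c2 > 0"
    and pc: "cos \<phi> * norm p \<le> Re p"
    and t: "t \<ge> 0" and b: "\<beta> > 0" and a: "2/3*\<beta> + \<delta> > 0" and rnz: "r \<noteq> 0"
  shows "norm (F (contour c1 \<phi>' r) - F (contour c2 \<phi>' r)) \<le>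
     (exp (max c1 c2 * norm p) * (Kg \<beta> * ((1 - sin \<phi>') * r\<^sup>2) powr (- (2/3*\<beta> + \<delta>) / 2))) * \<bar>c1 - c2\<bar>"
proof -
  have ph: "0 < \<phi>'" "\<phi>' < pi/6" using assms by linarith+
  note tf = trig_facts[OF ph]
  have sp: "sin (\<phi>' - \<phi>) > 0" using assms pi_gt_zero by (intro sin_gt_zero) linarith+
  let ?S = "closed_segment (contour c1 \<phi>' r) (contour c2 \<phi>' r)"
  let ?B = "exp (max c1 c2 * norm p) * (Kg \<beta> * ((1 - sin \<phi>') * r\<^sup>2) powr (- (2/3*\<beta> + \<delta>) / 2))"
  have pts: "\<exists>cc. cc > 0 \<and> cc \<le> max c1 c2 \<and> z = contour cc \<phi>' r" if "z \<in> ?S" for z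
  proof -
    have "\<exists>u. 0 \<le> u \<and> u \<le> 1 \<and> z = (1 - u) *\<^sub>R contour c1 \<phi>' r + u *\<^sub>R contour c2 \<phi>' r"
      using that by (simp only: in_segment(1))
    then obtain u where u: "0 \<le> u" "u \<le> 1" "z = (1 - u) *\<^sub>R contour c1 \<phi>' r + u *\<^sub>R contour c2 \<phi>' r"
      by blast
    have "(1 - u) * c1 + u * c2 > 0"
    proof (cases "u = 0")
      case True then show ?thesis using c by simp
    next
      case False then have "u * c2 > 0" using u c by simp
      moreover have "(1 - u) * c1 \<ge> 0" using u c by simp
      ultimately show ?thesis by linarith
    qed
    moreover have "(1 - u) * c1 + u * c2 \<le> (1 - u) * max c1 c2 + u * max c1 c2"
      using u by (intro add_mono mult_left_mono) auto
    moreover have "(1 - u) * max c1 c2 + u * max c1 c2 = max c1 c2" by (simp add: algebra_simps)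
    ultimately show ?thesis using u contour_affine by (intro exI[of _ "(1 - u) * c1 + u * c2"]) auto
  qed
  have der: "(F has_field_derivative ff \<beta> \<delta> p t z) (at z within ?S)" if zS: "z \<in> ?S" for z
  proof -
    obtain cc where cc: "cc > 0" "z = contour cc \<phi>' r" using pts[OF zS] by blast
    have "z \<notin> \<real>\<^sub>\<le>\<^sub>0" using contour_in[OF ph cc(1)] cc by simp
    then show ?thesis using Fd by (blast intro: has_field_derivative_at_within)
  qed
  have bnd: "norm (ff \<beta> \<delta> p t z) \<le> ?B" if zS: "z \<in> ?S" for z
  proof -
    obtain cc where cc: "cc > 0" "cc \<le> max c1 c2" "z = contour cc \<phi>' r" using pts[OF zS] by blast
    have im: "\<bar>Im (contour cc \<phi>' r)\<bar> = \<bar>r\<bar> * cos \<phi>'" using tf by (simp add: contour_Im abs_mult)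
    have "norm (ff \<beta> \<delta> p t z) \<le> exp (cc * norm p - \<bar>r\<bar> * norm p * sin (\<phi>' - \<phi>)) *
            (Kg \<beta> * ((1 - sin \<phi>') * (cc\<^sup>2 + \<bar>r\<bar>\<^sup>2)) powr (- (2/3*\<beta> + \<delta>) / 2))"
      unfolding cc(3) using ff_bound[OF assms(2,3,4) cc(1) _ contour_Re im pc t b a] by simp
    also have "\<dots> \<le> ?B"
    proof (rule mult_mono)
      have "\<bar>r\<bar> * norm p * sin (\<phi>' - \<phi>) \<ge> 0" using sp by simp
      moreover have "cc * norm p \<le> max c1 c2 * norm p" using cc by (intro mult_right_mono) auto
      ultimately show "exp (cc * norm p - \<bar>r\<bar> * norm p * sin (\<phi>' - \<phi>)) \<le> exp (max c1 c2 * norm p)" by simp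
      have q0: "(1 - sin \<phi>') * r\<^sup>2 > 0" using tf rnz by simp
      have "(1 - sin \<phi>') * r\<^sup>2 \<le> (1 - sin \<phi>') * (cc\<^sup>2 + \<bar>r\<bar>\<^sup>2)" using tf by (intro mult_left_mono) auto
      then have "((1 - sin \<phi>') * (cc\<^sup>2 + \<bar>r\<bar>\<^sup>2)) powr (- (2/3*\<beta> + \<delta>) / 2) \<le> ((1 - sin \<phi>') * r\<^sup>2) powr (- (2/3*\<beta> + \<delta>) / 2)"
        using a q0 by (intro powr_mono2') auto
      then show "Kg \<beta> * ((1 - sin \<phi>') * (cc\<^sup>2 + \<bar>r\<bar>\<^sup>2)) powr (- (2/3*\<beta> + \<delta>) / 2) \<le> Kg \<beta> * ((1 - sin \<phi>') * r\<^sup>2) powr (- (2/3*\<beta> + \<delta>) / 2)"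
        using Kg_pos[of \<beta>] by (rule mult_left_mono[OF _ less_imp_le])
    qed (use Kg_pos[of \<beta>] in auto)
    finally show ?thesis .
  qed
  have "norm (F (contour c1 \<phi>' r) - F (contour c2 \<phi>' r)) \<le> ?B * norm (contour c1 \<phi>' r - contour c2 \<phi>' r)"
    by (rule field_differentiable_bound[OF convex_closed_segment der bnd]) auto
  also have "norm (contour c1 \<phi>' r - contour c2 \<phi>' r) = \<bar>c1 - c2\<bar>"
    by (simp add: contour_def) (metis norm_of_real of_real_diff)
  finally show ?thesis .
qed



lemma powr_sq_tendsto:
  fixes q e :: real
  assumes "q > 0" "e < 0"
  shows "(\<lambda>k::nat. (q * (real k)\<^sup>2) powr e) \<longlonglongrightarrow> 0"
proof -
  have "filterlim (\<lambda>k::nat. (real k)^2) at_top sequentially"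
    by (rule filterlim_pow_at_top) (auto intro: filterlim_real_sequentially)
  then have "filterlim (\<lambda>k::nat. q * (real k)^2) at_top sequentially"
    by (rule filterlim_tendsto_pos_mult_at_top[OF tendsto_const assms(1)])
  then show ?thesis by (rule tendsto_neg_powr[OF assms(2)])
qed

lemma shift:
  assumes ph: "0 < \<phi>" "\<phi> < \<phi>'" "\<phi>' < pi/6" and c: "c1 > 0" "c2 > 0"
    and pc: "cos \<phi> * norm p \<le> Re p"
    and t: "t \<ge> 0" and b: "\<beta> > 0" and a: "2/3*\<beta> + \<delta> > 0"
    and B1: "B1 integrable_on UNIV" "\<And>r. norm (hh \<beta> \<delta> \<phi>' p t c1 r) \<le> B1 r"
    and B2: "B2 integrable_on UNIV" "\<And>r. norm (hh \<beta> \<delta> \<phi>' p t c2 r) \<le> B2 r"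
  shows "integral UNIV (hh \<beta> \<delta> \<phi>' p t c1) = integral UNIV (hh \<beta> \<delta> \<phi>' p t c2)"
proof -
  have ph': "0 < \<phi>'" "\<phi>' < pi/6" using ph by linarith+
  note tf = trig_facts[OF ph']
  obtain F where Fd: "\<forall>y. y \<notin> \<real>\<^sub>\<le>\<^sub>0 \<longrightarrow> (F has_field_derivative ff \<beta> \<delta> p t y) (at y)"
    using prim[OF t] by blast
  note L1 = hh_lim(2)[OF Fd ph' c(1) B1]
  note L2 = hh_lim(2)[OF Fd ph' c(2) B2]
  define e where "e = - (2/3*\<beta> + \<delta>) / 2"
  have e0: "e < 0" using a by (simp add: e_def)
  define K where "K = exp (max c1 c2 * norm p) * Kg \<beta>"
  have P: "(\<lambda>k::nat. ((1 - sin \<phi>') * (real k)\<^sup>2) powr e) \<longlonglongrightarrow> 0"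
    using tf e0 by (intro powr_sq_tendsto) auto
  have G: "(\<lambda>k::nat. K * ((1 - sin \<phi>') * (real k)\<^sup>2) powr e * \<bar>c1 - c2\<bar>) \<longlonglongrightarrow> 0"
    using tendsto_mult[OF tendsto_mult[OF tendsto_const[of K] P] tendsto_const[of "\<bar>c1 - c2\<bar>"]] by simp
  have sb: "norm (F (contour c1 \<phi>' r) - F (contour c2 \<phi>' r)) \<le> K * ((1 - sin \<phi>') * r\<^sup>2) powr e * \<bar>c1 - c2\<bar>"
    if "r \<noteq> 0" for r
    using seg_bound[OF Fd ph c pc t b a that] by (simp add: K_def e_def mult.assoc)
  have D1: "(\<lambda>k::nat. F (contour c1 \<phi>' (real k)) - F (contour c2 \<phi>' (real k))) \<longlonglongrightarrow> 0"
  proof (rule Lim_null_comparison[OF _ G])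
    show "\<forall>\<^sub>F k in sequentially. norm (F (contour c1 \<phi>' (real k)) - F (contour c2 \<phi>' (real k))) \<le> K * ((1 - sin \<phi>') * (real k)\<^sup>2) powr e * \<bar>c1 - c2\<bar>"
      using eventually_ge_at_top[of "1::nat"] by eventually_elim (rule sb, simp)
  qed
  have D2: "(\<lambda>k::nat. F (contour c1 \<phi>' (- real k)) - F (contour c2 \<phi>' (- real k))) \<longlonglongrightarrow> 0"
  proof (rule Lim_null_comparison[OF _ G])
    show "\<forall>\<^sub>F k in sequentially. norm (F (contour c1 \<phi>' (- real k)) - F (contour c2 \<phi>' (- real k))) \<le> K * ((1 - sin \<phi>') * (real k)\<^sup>2) powr e * \<bar>c1 - c2\<bar>"
      using eventually_ge_at_top[of "1::nat"] by eventually_elim (use sb[of "- real _"] in simp)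
  qed
  have T1: "(\<lambda>k::nat. (F (contour c1 \<phi>' (real k)) - F (contour c1 \<phi>' (- real k))) - (F (contour c2 \<phi>' (real k)) - F (contour c2 \<phi>' (- real k))))
      \<longlonglongrightarrow> integral UNIV (hh \<beta> \<delta> \<phi>' p t c1) - integral UNIV (hh \<beta> \<delta> \<phi>' p t c2)"
    by (rule tendsto_diff[OF L1 L2])
  have T2: "(\<lambda>k::nat. (F (contour c1 \<phi>' (real k)) - F (contour c1 \<phi>' (- real k))) - (F (contour c2 \<phi>' (real k)) - F (contour c2 \<phi>' (- real k))))
      \<longlonglongrightarrow> 0 - 0"
    using tendsto_diff[OF D1 D2] by (simp add: algebra_simps)
  from LIMSEQ_unique[OF T1 T2] show ?thesis by simp
qed



lemma exp_dom:
  fixes \<kappa> :: real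
  assumes "\<kappa> > 0"
  shows "(\<lambda>r. exp (- \<kappa> * \<bar>r\<bar>)) integrable_on UNIV" "integral UNIV (\<lambda>r. exp (- \<kappa> * \<bar>r\<bar>)) \<le> 2 / \<kappa>"
  using UNIV_int[of "\<lambda>r. exp (- \<kappa> * \<bar>r\<bar>)" 0 "2 / \<kappa>"] int_exp[OF assms] by auto

lemma pow_dom:
  fixes a c :: real
  assumes "a > 1" "c > 0"
  shows "(\<lambda>r. (max c \<bar>r\<bar>) powr (-a)) integrable_on UNIV"
    "integral UNIV (\<lambda>r. (max c \<bar>r\<bar>) powr (-a)) \<le> 2 * c powr (1 - a) + 2 * c powr (1 - a) / (a - 1)"
  using UNIV_int[of "\<lambda>r. (max c \<bar>r\<bar>) powr (-a)" c "2 * c powr (1 - a) + 2 * c powr (1 - a) / (a - 1)"]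
    int_pow[OF assms] by auto

definition C0 :: "real \<Rightarrow> real \<Rightarrow> real \<Rightarrow> real \<Rightarrow> real" where
  "C0 \<phi> \<phi>' \<beta> \<delta> = exp 1 * Kg \<beta> * (1 - sin \<phi>') powr (- (2/3*\<beta> + \<delta>) / 2) / (pi * sin (\<phi>' - \<phi>))"

lemma norm_pref: "norm (1 / (2 * complex_of_real pi * \<i>)) = 1 / (2 * pi)"
  by (simp add: norm_divide norm_mult)

lemma main_bound:
  assumes ph: "0 < \<phi>" "\<phi> < \<phi>'" "\<phi>' < pi/6" and c: "c > 0" and p0: "p \<noteq> 0"
    and pc: "cos \<phi> * norm p \<le> Re p"
    and t: "t \<ge> 0" and b: "\<beta> > 0" and a: "2/3*\<beta> + \<delta> > 0"
  shows "norm (invLap c \<phi>' (gfun \<beta> \<delta>) p t) \<le> C0 \<phi> \<phi>' \<beta> \<delta> * norm p powr (2/3*\<beta> + \<delta> - 1)"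
proof -
  have ph': "0 < \<phi>'" "\<phi>' < pi/6" using ph by linarith+
  note tf = trig_facts[OF ph']
  define s0 where "s0 = sin (\<phi>' - \<phi>)"
  have s0p: "s0 > 0" unfolding s0_def using ph pi_gt_zero by (intro sin_gt_zero) linarith+
  define e where "e = - (2/3*\<beta> + \<delta>) / 2"
  have e0: "e < 0" using a by (simp add: e_def)
  define \<kappa> where "\<kappa> = norm p * s0"
  have kp: "\<kappa> > 0" using p0 s0p by (simp add: \<kappa>_def)
  define Bc where "Bc = (\<lambda>c::real. \<lambda>r::real. exp (c * norm p) * (Kg \<beta> * ((1 - sin \<phi>') * c\<^sup>2) powr e) * exp (- \<kappa> * \<bar>r\<bar>))"
  have Bint: "Bc c integrable_on UNIV" for c
    using integrable_on_cmult_left[OF exp_dom(1)[OF kp], of "exp (c * norm p) * (Kg \<beta> * ((1 - sin \<phi>') * c\<^sup>2) powr e)"]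
    by (simp add: Bc_def)
  have Bbound: "norm (hh \<beta> \<delta> \<phi>' p t c r) \<le> Bc c r" if cp: "c > 0" for c r
  proof -
    have "norm (hh \<beta> \<delta> \<phi>' p t c r) \<le> exp (c * norm p - \<bar>r\<bar> * norm p * sin (\<phi>' - \<phi>)) *
            (Kg \<beta> * ((1 - sin \<phi>') * (c\<^sup>2 + r\<^sup>2)) powr e)"
      using hh_bound[OF ph cp pc t b a] by (simp add: e_def)
    also have "exp (c * norm p - \<bar>r\<bar> * norm p * sin (\<phi>' - \<phi>)) = exp (c * norm p) * exp (- \<kappa> * \<bar>r\<bar>)"
      by (simp add: \<kappa>_def s0_def exp_diff[symmetric] exp_minus field_simps)
    also have "((1 - sin \<phi>') * (c\<^sup>2 + r\<^sup>2)) powr e \<le> ((1 - sin \<phi>') * c\<^sup>2) powr e"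
      using tf cp e0 by (intro powr_mono2') (auto intro!: mult_left_mono)
    finally show ?thesis
      using Kg_pos[of \<beta>] by (simp add: Bc_def mult_left_mono mult_ac)
  qed
  define c' where "c' = 1 / norm p"
  have c'p: "c' > 0" using p0 by (simp add: c'_def)
  have sh: "integral UNIV (hh \<beta> \<delta> \<phi>' p t c) = integral UNIV (hh \<beta> \<delta> \<phi>' p t c')"
    by (rule shift[OF ph c c'p pc t b a Bint Bbound[OF c] Bint Bbound[OF c'p]])
  have hint: "hh \<beta> \<delta> \<phi>' p t c' integrable_on UNIV"
  proof -
    obtain F where Fd: "\<forall>y. y \<notin> \<real>\<^sub>\<le>\<^sub>0 \<longrightarrow> (F has_field_derivative ff \<beta> \<delta> p t y) (at y)"
      using prim[OF t] by blast
    show ?thesis by (rule hh_lim(1)[OF Fd ph' c'p Bint Bbound[OF c'p]])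
  qed
  have "norm (integral UNIV (hh \<beta> \<delta> \<phi>' p t c')) \<le> integral UNIV (Bc c')"
    by (rule integral_norm_bound_integral[OF hint Bint Bbound[OF c'p]])
  also have "integral UNIV (Bc c') = exp (c' * norm p) * (Kg \<beta> * ((1 - sin \<phi>') * c'\<^sup>2) powr e) * integral UNIV (\<lambda>r. exp (- \<kappa> * \<bar>r\<bar>))"
    by (simp add: Bc_def)
  also have "\<dots> \<le> exp (c' * norm p) * (Kg \<beta> * ((1 - sin \<phi>') * c'\<^sup>2) powr e) * (2 / \<kappa>)"
    using exp_dom(2)[OF kp] Kg_pos[of \<beta>] by (intro mult_left_mono) auto
  also have "exp (c' * norm p) * (Kg \<beta> * ((1 - sin \<phi>') * c'\<^sup>2) powr e) * (2 / \<kappa>)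
      = 2 * pi * (C0 \<phi> \<phi>' \<beta> \<delta> * norm p powr (2/3*\<beta> + \<delta> - 1))"
  proof -
    have np: "norm p > 0" using p0 by simp
    have e1: "c' * norm p = 1" using np by (simp add: c'_def)
    have e2: "((1 - sin \<phi>') * c'\<^sup>2) powr e = (1 - sin \<phi>') powr e * norm p powr (2/3*\<beta> + \<delta>)"
    proof -
      have x1: "c'\<^sup>2 = norm p powr (-2)"
        using np by (simp add: c'_def powr_minus power2_eq_square powr_realpow[symmetric] powr_add[symmetric]) (simp add: field_simps)
      have "-2 * e = 2/3*\<beta> + \<delta>" by (simp add: e_def)
      then have x2: "(norm p powr (-2)) powr e = norm p powr (2/3*\<beta> + \<delta>)" by (simp add: powr_powr)
      have "((1 - sin \<phi>') * c'\<^sup>2) powr e = (1 - sin \<phi>') powr e * (c'\<^sup>2) powr e"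
        by (rule powr_mult)
      then show ?thesis unfolding x1 x2 .
    qed
    have e3: "norm p powr (2/3*\<beta> + \<delta> - 1) = norm p powr (2/3*\<beta> + \<delta>) / norm p"
      using np by (simp add: powr_diff)
    show ?thesis
      unfolding e1 e2 e3 C0_def e_def[symmetric] \<kappa>_def s0_def using np s0p pi_gt_zero
      by (simp add: s0_def field_simps)
  qed
  finally have I: "norm (integral UNIV (hh \<beta> \<delta> \<phi>' p t c')) \<le> 2 * pi * (C0 \<phi> \<phi>' \<beta> \<delta> * norm p powr (2/3*\<beta> + \<delta> - 1))" .
  have "norm (invLap c \<phi>' (gfun \<beta> \<delta>) p t) = (1 / (2 * pi)) * norm (integral UNIV (hh \<beta> \<delta> \<phi>' p t c'))"
    unfolding invLap_hh sh norm_mult norm_pref ..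
  also have "\<dots> \<le> (1 / (2 * pi)) * (2 * pi * (C0 \<phi> \<phi>' \<beta> \<delta> * norm p powr (2/3*\<beta> + \<delta> - 1)))"
    using I pi_gt_zero by (intro mult_left_mono) auto
  also have "\<dots> = C0 \<phi> \<phi>' \<beta> \<delta> * norm p powr (2/3*\<beta> + \<delta> - 1)" using pi_gt_zero by simp
  finally show ?thesis .
qed



lemma zero_val:
  assumes ph: "0 < \<phi>" "\<phi> < \<phi>'" "\<phi>' < pi/6" and c: "c > 0"
    and t: "t \<ge> 0" and b: "\<beta> > 0" and a1: "2/3*\<beta> + \<delta> > 1"
  shows "invLap c \<phi>' (gfun \<beta> \<delta>) 0 t = 0"
proof -
  define a where "a = 2/3*\<beta> + \<delta>"
  have a: "2/3*\<beta> + \<delta> > 0" using a1 by simp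
  have ph': "0 < \<phi>'" "\<phi>' < pi/6" using ph by linarith+
  note tf = trig_facts[OF ph']
  define e where "e = - (2/3*\<beta> + \<delta>) / 2"
  have e0: "e < 0" using a by (simp add: e_def)
  have pc: "cos \<phi> * norm (0::complex) \<le> Re 0" by simp
  define K where "K = Kg \<beta> * (1 - sin \<phi>') powr e"
  have K0: "K \<ge> 0" using Kg_pos[of \<beta>] by (simp add: K_def)
  define Dc where "Dc = (\<lambda>c::real. \<lambda>r::real. K * (max c \<bar>r\<bar>) powr (-a))"
  have Dint: "Dc c integrable_on UNIV" if "c > 0" for c
    using integrable_on_cmult_left[OF pow_dom(1)[OF _ that], of a K] a1 by (simp add: Dc_def a_def)
  have Dbound: "norm (hh \<beta> \<delta> \<phi>' 0 t c r) \<le> Dc c r" if cp: "c > 0" for c r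
  proof -
    define m where "m = max c \<bar>r\<bar>"
    have m0: "m > 0" using cp by (simp add: m_def)
    have "norm (hh \<beta> \<delta> \<phi>' 0 t c r) \<le> Kg \<beta> * ((1 - sin \<phi>') * (c\<^sup>2 + r\<^sup>2)) powr e"
      using hh_bound[OF ph cp pc t b a] by (simp add: e_def)
    also have "((1 - sin \<phi>') * (c\<^sup>2 + r\<^sup>2)) powr e = (1 - sin \<phi>') powr e * (c\<^sup>2 + r\<^sup>2) powr e"
      by (rule powr_mult)
    also have "(c\<^sup>2 + r\<^sup>2) powr e \<le> (m\<^sup>2) powr e"
    proof (rule powr_mono2')
      show "e \<le> 0" using e0 by simp
      show "0 < m\<^sup>2" using m0 by simp
      show "m\<^sup>2 \<le> c\<^sup>2 + r\<^sup>2" unfolding m_def by (cases "c \<le> \<bar>r\<bar>") (auto simp: max_def)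
    qed
    also have "(m\<^sup>2) powr e = m powr (-a)"
    proof -
      have "m\<^sup>2 = m powr 2" using powr_realpow[OF m0, of 2] by simp
      moreover have "2 * e = -a" by (simp add: e_def a_def)
      ultimately show ?thesis by (simp add: powr_powr)
    qed
    finally show ?thesis
      using Kg_pos[of \<beta>] tf by (simp add: Dc_def K_def m_def mult_left_mono mult.assoc)
  qed
  have hint: "hh \<beta> \<delta> \<phi>' 0 t c' integrable_on UNIV" if "c' > 0" for c'
  proof -
    obtain F where Fd: "\<forall>y. y \<notin> \<real>\<^sub>\<le>\<^sub>0 \<longrightarrow> (F has_field_derivative ff \<beta> \<delta> 0 t y) (at y)"
      using prim[OF t] by blast
    show ?thesis by (rule hh_lim(1)[OF Fd ph' that Dint[OF that] Dbound[OF that]])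
  qed
  define Q where "Q = K * (2 + 2 / (a - 1))"
  have bnd: "norm (integral UNIV (hh \<beta> \<delta> \<phi>' 0 t c)) \<le> Q * c' powr (1 - a)" if cp: "c' > 0" for c'
  proof -
    have "integral UNIV (hh \<beta> \<delta> \<phi>' 0 t c) = integral UNIV (hh \<beta> \<delta> \<phi>' 0 t c')"
      by (rule shift[OF ph c cp pc t b a Dint[OF c] Dbound[OF c] Dint[OF cp] Dbound[OF cp]])
    then have "norm (integral UNIV (hh \<beta> \<delta> \<phi>' 0 t c)) \<le> integral UNIV (Dc c')"
      using integral_norm_bound_integral[OF hint[OF cp] Dint[OF cp] Dbound[OF cp]] by simp
    also have "integral UNIV (Dc c') = K * integral UNIV (\<lambda>r. (max c' \<bar>r\<bar>) powr (-a))"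
      by (simp add: Dc_def)
    also have "\<dots> \<le> K * (2 * c' powr (1 - a) + 2 * c' powr (1 - a) / (a - 1))"
      using pow_dom(2)[OF _ cp, of a] a1 K0 by (intro mult_left_mono) (auto simp: a_def)
    also have "\<dots> = Q * c' powr (1 - a)" by (simp add: Q_def field_simps)
    finally show ?thesis .
  qed
  have lim: "(\<lambda>k::nat. Q * real k powr (1 - a)) \<longlonglongrightarrow> 0"
  proof -
    have "(\<lambda>k::nat. real k powr (1 - a)) \<longlonglongrightarrow> 0"
      using a1 by (intro tendsto_neg_powr filterlim_real_sequentially) (simp add: a_def)
    from tendsto_mult[OF tendsto_const[of Q] this] show ?thesis by simp
  qed
  have "norm (integral UNIV (hh \<beta> \<delta> \<phi>' 0 t c)) \<le> 0"
  proof (rule LIMSEQ_le_const[OF lim])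
    show "\<exists>N. \<forall>n\<ge>N. norm (integral UNIV (hh \<beta> \<delta> \<phi>' 0 t c)) \<le> Q * real n powr (1 - a)"
      using bnd by (intro exI[of _ 1]) auto
  qed
  then have "integral UNIV (hh \<beta> \<delta> \<phi>' 0 t c) = 0" by simp
  then show ?thesis unfolding invLap_hh by simp
qed



lemma Sphi_cone:
  assumes "0 < \<phi>" "\<phi> < pi/2" "p \<in> Sphi \<phi>"
  shows "p \<noteq> 0" "cos \<phi> * norm p \<le> Re p"
proof -
  show p0: "p \<noteq> 0" using assms by (simp add: Sphi_def)
  have ar: "\<bar>Arg p\<bar> < \<phi>" using assms by (simp add: Sphi_def abs_less_iff)
  have "cos \<phi> \<le> cos \<bar>Arg p\<bar>" using ar assms by (subst cos_mono_le_eq) auto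
  also have "cos \<bar>Arg p\<bar> = cos (Arg p)" by (simp add: abs_if)
  also have "cos (Arg p) = Re p / norm p" using p0 by (rule cos_Arg)
  finally show "cos \<phi> * norm p \<le> Re p" using p0 by (simp add: field_simps)
qed

lemma closure_cone:
  assumes "0 < \<phi>" "\<phi> < pi/2"
  shows "closure (Sphi \<phi>) \<subseteq> {p. cos \<phi> * norm p \<le> Re p}"
proof (rule closure_minimal)
  show "Sphi \<phi> \<subseteq> {p. cos \<phi> * norm p \<le> Re p}" using Sphi_cone[OF assms] by auto
  show "closed {p::complex. cos \<phi> * norm p \<le> Re p}"
    by (intro closed_Collect_le continuous_intros)
qed

lemma pw:
  fixes b \<nu> x :: real
  assumes "b > 0" "\<nu> > 0" "x > 0"
  shows "x powr b * exp (- \<nu> * x) \<le> b powr b * \<nu> powr (-b)"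
proof -
  define u where "u = \<nu> * x"
  have u0: "u > 0" using assms by (simp add: u_def)
  have "u / b \<le> exp (u / b)" using exp_ge_add_one_self[of "u / b"] by linarith
  then have "u \<le> b * exp (u / b)" using assms by (simp add: field_simps)
  then have "u powr b \<le> (b * exp (u / b)) powr b" using u0 assms by (intro powr_mono2) auto
  also have "\<dots> = b powr b * exp (u / b) powr b" by (rule powr_mult)
  also have "exp (u / b) powr b = exp u" using assms by (simp add: powr_def)
  finally have U: "u powr b \<le> b powr b * exp u" .
  have xe: "x powr b = u powr b * \<nu> powr (-b)"
    using assms by (simp add: u_def powr_mult powr_minus)
  have "x powr b * exp (- \<nu> * x) = u powr b * exp (- u) * \<nu> powr (-b)" by (simp add: xe u_def)
  also have "\<dots> \<le> (b powr b * exp u) * exp (- u) * \<nu> powr (-b)"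
    using U by (intro mult_right_mono) auto
  also have "\<dots> = b powr b * \<nu> powr (-b)" by (simp add: exp_minus)
  finally show ?thesis .
qed

lemma elem_bound:
  fixes a \<nu> x C G :: real
  assumes a: "a > 1" and nu: "\<nu> > 1" and x: "x > 0" and C: "C \<ge> 0" and G: "G \<le> C * x powr (a - 1)"
  shows "(1 + x\<^sup>2) * exp (- \<nu> * x) * G \<le> C * ((a - 1) powr (a - 1) + (a + 1) powr (a + 1)) * \<nu> powr (1 - a)"
proof -
  have "(1 + x\<^sup>2) * exp (- \<nu> * x) * G \<le> (1 + x\<^sup>2) * exp (- \<nu> * x) * (C * x powr (a - 1))"
    using G by (intro mult_left_mono) auto
  also have "\<dots> = C * (x powr (a - 1) * exp (- \<nu> * x) + x powr (a + 1) * exp (- \<nu> * x))"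
  proof -
    have h: "x powr 2 = x\<^sup>2" using powr_realpow[OF x, of 2] by simp
    have "x\<^sup>2 * x powr (a - 1) = x powr 2 * x powr (a - 1)" by (simp only: h)
    also have "\<dots> = x powr (2 + (a - 1))" by (rule powr_add[symmetric])
    also have "2 + (a - 1) = a + 1" by simp
    finally have "x\<^sup>2 * x powr (a - 1) = x powr (a + 1)" .
    then show ?thesis by (simp add: algebra_simps)
  qed
  also have "\<dots> \<le> C * ((a - 1) powr (a - 1) * \<nu> powr (-(a - 1)) + (a + 1) powr (a + 1) * \<nu> powr (-(a + 1)))"
    using pw[of "a - 1" \<nu> x] pw[of "a + 1" \<nu> x] a nu x C by (intro mult_left_mono add_mono) auto
  also have "\<dots> \<le> C * ((a - 1) powr (a - 1) * \<nu> powr (1 - a) + (a + 1) powr (a + 1) * \<nu> powr (1 - a))"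
  proof -
    have "\<nu> powr (-(a + 1)) \<le> \<nu> powr (1 - a)" using nu by (intro powr_mono) auto
    then show ?thesis using C a by (intro mult_left_mono add_mono) (auto intro: mult_left_mono)
  qed
  also have "\<dots> = C * ((a - 1) powr (a - 1) + (a + 1) powr (a + 1)) * \<nu> powr (1 - a)"
    by (simp add: algebra_simps)
  finally show ?thesis .
qed



lemma C0_nonneg:
  assumes "0 < \<phi>" "\<phi> < \<phi>'" "\<phi>' < pi/6"
  shows "C0 \<phi> \<phi>' \<beta> \<delta> \<ge> 0"
proof -
  have "sin (\<phi>' - \<phi>) > 0" using assms pi_gt_zero by (intro sin_gt_zero) linarith+
  then show ?thesis using Kg_pos[of \<beta>] pi_gt_zero unfolding C0_def by simp
qed

theorem lemma23:
  fixes \<phi> \<phi>' \<beta> \<delta> c :: real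
  assumes "0 < \<phi>" and "\<phi> < \<phi>'" and "\<phi>' < pi / 6"
    and "c > 0"
    and "\<beta> > 0" and "2/3 * \<beta> + \<delta> > 0"
  shows "(\<exists>C. \<forall>T>0. \<forall>p\<in>Sphi \<phi>. \<forall>t\<in>{0..T}.
            cmod (invLap c \<phi>' (gfun \<beta> \<delta>) p t) \<le> C * cmod p powr (2/3 * \<beta> + \<delta> - 1))
       \<and> (2/3 * \<beta> + \<delta> > 1 \<longrightarrow>
            (\<exists>C. \<forall>T>0. \<forall>\<nu>>1.
               norm_nu \<phi> T \<nu> (invLap c \<phi>' (gfun \<beta> \<delta>)) \<le> C * \<nu> powr (- 2/3 * \<beta> - \<delta> + 1)))"
proof -
  note ph = assms(1,2,3)
  have ph2: "\<phi> < pi/2" using assms by linarith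
  have P1: "\<forall>T>0. \<forall>p\<in>Sphi \<phi>. \<forall>t\<in>{0..T}.
            cmod (invLap c \<phi>' (gfun \<beta> \<delta>) p t) \<le> C0 \<phi> \<phi>' \<beta> \<delta> * cmod p powr (2/3 * \<beta> + \<delta> - 1)"
  proof (intro allI impI ballI)
    fix T p t assume "T > 0" "p \<in> Sphi \<phi>" "t \<in> {0..T::real}"
    then show "cmod (invLap c \<phi>' (gfun \<beta> \<delta>) p t) \<le> C0 \<phi> \<phi>' \<beta> \<delta> * cmod p powr (2/3 * \<beta> + \<delta> - 1)"
      using main_bound[OF ph assms(4) Sphi_cone[OF assms(1) ph2] _ assms(5,6)] by auto
  qed
  have P2: "\<exists>C. \<forall>T>0. \<forall>\<nu>>1. norm_nu \<phi> T \<nu> (invLap c \<phi>' (gfun \<beta> \<delta>)) \<le> C * \<nu> powr (- 2/3 * \<beta> - \<delta> + 1)"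
    if a1: "2/3 * \<beta> + \<delta> > 1"
  proof -
    define a where "a = 2/3 * \<beta> + \<delta>"
    have a1': "a > 1" using a1 by (simp add: a_def)
    define D where "D = C0 \<phi> \<phi>' \<beta> \<delta> * ((a - 1) powr (a - 1) + (a + 1) powr (a + 1))"
    have D0: "D \<ge> 0" using C0_nonneg[OF ph] by (simp add: D_def)
    have ex: "- 2/3 * \<beta> - \<delta> + 1 = 1 - a" by (simp add: a_def)
    show ?thesis
    proof (intro exI[of _ "\<bar>M0\<bar> * D"] allI impI)
      fix T \<nu> :: real assume T: "T > 0" and nu: "\<nu> > 1"
      define G where "G = invLap c \<phi>' (gfun \<beta> \<delta>)"
      define S where "S = {(1 + (cmod p)\<^sup>2) * exp (- \<nu> * cmod p) * cmod (G p t) | p t. p \<in> closure (Sphi \<phi>) \<and> t \<in> {0..T}}"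
      define U where "U = D * \<nu> powr (1 - a)"
      have U0: "U \<ge> 0" using D0 by (simp add: U_def)
      have elem: "y \<le> U \<and> 0 \<le> y" if "y \<in> S" for y
      proof -
        obtain p t where y: "y = (1 + (cmod p)\<^sup>2) * exp (- \<nu> * cmod p) * cmod (G p t)"
          and p: "p \<in> closure (Sphi \<phi>)" and t: "t \<in> {0..T}"
          using \<open>y \<in> S\<close> unfolding S_def by blast
        have y0: "0 \<le> y" unfolding y by simp
        show ?thesis
        proof (cases "p = 0")
          case True
          have "G p t = 0" unfolding G_def True
            using zero_val[OF ph assms(4) _ assms(5) a1] t by auto
          then show ?thesis using U0 by (simp add: y)
        next
          case False
          have pc: "cos \<phi> * norm p \<le> Re p" using closure_cone[OF assms(1) ph2] p by auto
          have Gb: "cmod (G p t) \<le> C0 \<phi> \<phi>' \<beta> \<delta> * cmod p powr (a - 1)"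
            unfolding G_def a_def using main_bound[OF ph assms(4) False pc _ assms(5,6)] t by auto
          have "y \<le> C0 \<phi> \<phi>' \<beta> \<delta> * ((a - 1) powr (a - 1) + (a + 1) powr (a + 1)) * \<nu> powr (1 - a)"
            unfolding y using elem_bound[OF a1' nu _ C0_nonneg[OF ph] Gb] False by simp
          then show ?thesis using y0 by (simp add: U_def D_def)
        qed
      qed
      have one: "(1::complex) \<in> closure (Sphi \<phi>)"
        using closure_subset[of "Sphi \<phi>"] assms(1) by (auto simp: Sphi_def)
      have "(1 + (cmod (1::complex))\<^sup>2) * exp (- \<nu> * cmod (1::complex)) * cmod (G 1 0) \<in> S"
        unfolding S_def using one T by fastforce
      then have Sne: "S \<noteq> {}" by blast
      have bdd: "bdd_above S" unfolding bdd_above_def using elem by blast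
      have SupU: "Sup S \<le> U" using Sne elem by (intro cSup_least) auto
      obtain y where yS: "y \<in> S" using Sne by blast
      have Sup0: "0 \<le> Sup S" using cSup_upper2[OF yS _ bdd] elem[OF yS] by auto
      have "norm_nu \<phi> T \<nu> G = M0 * Sup S" unfolding norm_nu_def S_def ..
      also have "\<dots> \<le> \<bar>M0\<bar> * Sup S" using Sup0 by (intro mult_right_mono) auto
      also have "\<dots> \<le> \<bar>M0\<bar> * U" using SupU by (intro mult_left_mono) auto
      finally show "norm_nu \<phi> T \<nu> (invLap c \<phi>' (gfun \<beta> \<delta>)) \<le> \<bar>M0\<bar> * D * \<nu> powr (- 2/3 * \<beta> - \<delta> + 1)"
        unfolding ex G_def U_def by (simp add: mult.assoc)
    qed
  qed
  show ?thesis using P1 P2 by blast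
qed

end
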